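(* Let $\beta$ be a pseudo-Anosov 3-braid with MP-ratio $\alpha$, and for $k\ge0$ let $\epsilon_k=\operatorname{sgn}(x_k)\in\{\pm1\}$. Then for every $k\ge0$: (1) if $\epsilon_k=+1$ and the 4-tuple of $\mathcal T_{k+1}$ has Type 1, then $i_{k+1}=2i_k$; (2) if $\epsilon_k=+1$ and it has Type 2, then $i_{k+1}=2i_k-1$; (3) if $\epsilon_k=-1$ and it has Type 1, then $i_{k+1}=2i_k-1$; (4) if $\epsilon_k=-1$ and it has Type 2, then $i_{k+1}=2i_k$. Consequently $\epsilon_{k+1}=-1$ in Cases (1) and (4), and $\epsilon_{k+1}=+1$ in Cases (2) and (3). In particular, a Type 1 maximal splitting $\mathcal T_k\rightharpoonup\mathcal T_{k+1}$ changes the sign of the train track and a Type 2 maximal splitting preserves it.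
   Context: Identify $B_3$ with the mapping class group of the 3-punctured disk $D_3$. A measured train track on $D_3$ is a smooth graph with trivalent switches where the three edges are tangent, each edge with positive weight, the weight on one side of each switch equalling the sum of the two on the other; weights up to scaling. Maximal splitting $\tau\rightharpoonup\tau'$ splits simultaneously along all edges of largest weight. The paper fixes measured train tracks $\mathrm M(a,b),\mathrm W(a,b)$ ($a,b>0$) on $D_3$ with six edges and four switches. For a pseudo-Anosov 3-braid $\beta$ there is a unique irrational $\alpha\in(0,1)$ (the MP-ratio) such that exactly one of $\mathrm M(1,\alpha),\mathrm M(\alpha,1),\mathrm W(\alpha,1),\mathrm W(1,\alpha)$ is invariant under $\beta$; call it $\tau_0$, let $n=\lfloor1/\alpha\rfloor$ and $\tau_0\rightharpoonup\tau_1\rightharpoonup\cdots$ the maximal splitting sequence. From $\tau_{n+4}$ on all train tracks have exactly three distinct edge weights; set $\mathcal T_k=\tau_{n+3+k}$, $k\ge1$. The 4-tuple $(x_k,y_k;z_k,w_k)\in\mathbb Z^4$ of $\mathcal T_k$ is given by: smallest weight $\tfrac12(x_k+y_k\alpha)$, second smallest $\tfrac12(z_k+w_k\alpha)$; the sign of $\mathcal T_k$ is $\operatorname{sgn}(x_k)$ (nonzero). Set $(x_0,y_0;z_0,w_0)=(1,-n;0,1)$. For $k\ge0$ the 4-tuple of $\mathcal T_{k+1}$ is either $(z_k-x_k,w_k-y_k;x_k,y_k)$ (Type 1; the splitting $\mathcal T_k\rightharpoonup\mathcal T_{k+1}$ is then called Type 1) or $(x_k,y_k;z_k-x_k,w_k-y_k)$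 (Type 2). Farey data: $\frac st\boxplus\frac{s'}{t'}=\frac{s+s'}{t+t'}$; $L_0=\{\frac01,\frac11\}$ (not reduced); $L_{k+1}=L_k\cup\{a_{k,i}\boxplus a_{k,i+1}:1\le i\le 2^k\}$ listed increasingly as $a_{k+1,1}<\cdots<a_{k+1,2^{k+1}+1}$; $I_{k,i}=\left(\frac1{n+a_{k,i+1}},\frac1{n+a_{k,i}}\right)$; $i_k$ is the unique index with $\alpha\in I_{k,i_k}$. *)

theory Defs
  imports Complex_Main
begin

fun mediant_insert :: "(nat \<times> nat) list \<Rightarrow> (nat \<times> nat) list" where
  "mediant_insert [] = []"
| "mediant_insert [p] = [p]"
| "mediant_insert ((s,t) # (s',t') # rest) =
     (s,t) # (s + s', t + t') # mediant_insert ((s',t') # rest)"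

fun farey_list :: "nat \<Rightarrow> (nat \<times> nat) list" where
  "farey_list 0 = [(0,1),(1,1)]"
| "farey_list (Suc k) = mediant_insert (farey_list k)"

(* a_{k,i}, 1-indexed, as a real number *)
definition farey_a :: "nat \<Rightarrow> nat \<Rightarrow> real" where
  "farey_a k i = (let (s,t) = farey_list k ! (i - 1) in real s / real t)"

definition farey_interval :: "nat \<Rightarrow> nat \<Rightarrow> nat \<Rightarrow> real set" where
  "farey_interval n k i =
     {1 / (real n + farey_a k (i + 1)) <..< 1 / (real n + farey_a k i)}"

definition mp_n :: "real \<Rightarrow> nat" where
  "mp_n \<alpha> = nat \<lfloor>1 / \<alpha>\<rfloor>"

definition farey_index :: "real \<Rightarrow> nat \<Rightarrow> nat" where
  "farey_index \<alpha> k = (THE i. 1 \<le> i \<and> i \<le> 2 ^ k \<and> \<alpha> \<in> farey_interval (mp_n \<alpha>) k i)"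

definition type1_step :: "int \<times> int \<times> int \<times> int \<Rightarrow> int \<times> int \<times> int \<times> int \<Rightarrow> bool" where
  "type1_step t t' = (case t of (x,y,z,w) \<Rightarrow> t' = (z - x, w - y, x, y))"

definition type2_step :: "int \<times> int \<times> int \<times> int \<Rightarrow> int \<times> int \<times> int \<times> int \<Rightarrow> bool" where
  "type2_step t t' = (case t of (x,y,z,w) \<Rightarrow> t' = (x, y, z - x, w - y))"

end

theory Submission
  imports Defs
begin

lemma mi_length: "L \<noteq> [] \<Longrightarrow> length (mediant_insert L) = 2 * length L - 1"
  by (induction L rule: mediant_insert.induct) auto

lemma mi_even: "j < length L \<Longrightarrow> mediant_insert L ! (2*j) = L ! j"
proof (induction L arbitrary: j rule: mediant_insert.induct)
  case (3 s t s' t' rest)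
  show ?case
  proof (cases j)
    case 0 then show ?thesis by simp
  next
    case (Suc j')
    have "mediant_insert ((s,t) # (s',t') # rest) ! (2*j) = mediant_insert ((s',t') # rest) ! (2*j')"
      using Suc by (simp add: numeral_2_eq_2)
    also have "\<dots> = ((s',t') # rest) ! j'" using 3 Suc by simp
    finally show ?thesis using Suc by simp
  qed
qed auto

lemma mi_odd: "Suc j < length L \<Longrightarrow> mediant_insert L ! (2*j+1) =
   (fst (L!j) + fst (L!Suc j), snd (L!j) + snd (L!Suc j))"
proof (induction L arbitrary: j rule: mediant_insert.induct)
  case (3 s t s' t' rest)
  show ?case
  proof (cases j)
    case 0 then show ?thesis by simp
  next
    case (Suc j')
    have "mediant_insert ((s,t) # (s',t') # rest) ! (2*j+1) = mediant_insert ((s',t') # rest) ! (2*j'+1)"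
      using Suc by (simp add: numeral_2_eq_2)
    also have "\<dots> = (fst (((s',t') # rest)!j') + fst (((s',t') # rest)!Suc j'),
                      snd (((s',t') # rest)!j') + snd (((s',t') # rest)!Suc j'))"
      using 3 Suc by simp
    finally show ?thesis using Suc by simp
  qed
qed auto

lemma fl_length: "length (farey_list k) = 2^k + 1"
proof (induction k)
  case (Suc k)
  have "farey_list k \<noteq> []" using Suc by auto
  then have "length (mediant_insert (farey_list k)) = 2 * length (farey_list k) - 1" by (rule mi_length)
  then show ?case using Suc by simp
qed simp

lemma mi_pos: "\<forall>p\<in>set L. 0 < snd p \<Longrightarrow> \<forall>p\<in>set (mediant_insert L). 0 < snd p"
  by (induction L rule: mediant_insert.induct) auto

lemma fl_pos_set: "\<forall>p\<in>set (farey_list k). 0 < snd p"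
  by (induction k) (auto simp: mi_pos)

lemma fl_pos: "j < length (farey_list k) \<Longrightarrow> 0 < snd (farey_list k ! j)"
  using fl_pos_set nth_mem by blast

lemma fl_adj: "Suc j < length (farey_list k) \<Longrightarrow>
  fst (farey_list k ! j) * snd (farey_list k ! Suc j) < fst (farey_list k ! Suc j) * snd (farey_list k ! j)"
proof (induction k arbitrary: j)
  case 0
  then show ?case by simp
next
  case (Suc k)
  define L where "L = farey_list k"
  have len: "length (farey_list (Suc k)) = 2 * length L - 1"
  proof -
    have "L \<noteq> []" using fl_length[of k] L_def by auto
    then show ?thesis using mi_length[of L] L_def by simp
  qed
  have FL: "farey_list (Suc k) = mediant_insert L" by (simp add: L_def)
  consider j' where "j = 2*j'" | j' where "j = 2*j'+1" by (metis oddE evenE)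
  then show ?case
  proof cases
    case 1
    have jl: "Suc j' < length L" using Suc.prems 1 len by simp
    have a: "farey_list (Suc k) ! j = L ! j'" using FL 1 mi_even jl by simp
    have b: "farey_list (Suc k) ! Suc j = (fst (L!j') + fst (L!Suc j'), snd (L!j') + snd (L!Suc j'))"
      using FL 1 mi_odd[OF jl] by simp
    have IH: "fst (L ! j') * snd (L ! Suc j') < fst (L ! Suc j') * snd (L ! j')"
      using Suc.IH jl L_def by simp
    show ?thesis unfolding a b using IH by (simp add: algebra_simps)
  next
    case 2
    have jl: "Suc j' < length L" using Suc.prems 2 len by simp
    have b: "farey_list (Suc k) ! j = (fst (L!j') + fst (L!Suc j'), snd (L!j') + snd (L!Suc j'))"
      using FL 2 mi_odd[OF jl] by simp
    have e: "Suc j = 2 * Suc j'" using 2 by simp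
    have a: "farey_list (Suc k) ! Suc j = L ! Suc j'" unfolding e FL using mi_even[OF jl] by simp
    have IH: "fst (L ! j') * snd (L ! Suc j') < fst (L ! Suc j') * snd (L ! j')"
      using Suc.IH jl L_def by simp
    show ?thesis unfolding a b using IH by (simp add: algebra_simps)
  qed
qed

definition fv :: "nat \<Rightarrow> nat \<Rightarrow> real" where
  "fv k j = real (fst (farey_list k ! j)) / real (snd (farey_list k ! j))"

lemma farey_a_fv: "farey_a k i = fv k (i - 1)"
  by (simp add: farey_a_def fv_def Let_def case_prod_beta)

lemma fv_nonneg: "0 \<le> fv k j" by (simp add: fv_def)

lemma fv_adj: "Suc j < length (farey_list k) \<Longrightarrow> fv k j < fv k (Suc j)"
proof -
  assume h: "Suc j < length (farey_list k)"
  have p1: "0 < real (snd (farey_list k ! j))" using fl_pos h by simp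
  have p2: "0 < real (snd (farey_list k ! Suc j))" using fl_pos h by simp
  have "real (fst (farey_list k ! j) * snd (farey_list k ! Suc j)) < real (fst (farey_list k ! Suc j) * snd (farey_list k ! j))"
    using fl_adj[OF h] by linarith
  then show ?thesis using p1 p2 unfolding fv_def by (simp add: divide_simps)
qed

lemma fv_mono: "j \<le> j' \<Longrightarrow> j' < length (farey_list k) \<Longrightarrow> fv k j \<le> fv k j'"
proof (induction j' rule: dec_induct)
  case base then show ?case by simp
next
  case (step m)
  then show ?case using fv_adj[of m k] by simp
qed

definition fs :: "nat \<Rightarrow> nat \<Rightarrow> int" where "fs k j = int (fst (farey_list k ! j))"
definition ft :: "nat \<Rightarrow> nat \<Rightarrow> int" where "ft k j = int (snd (farey_list k ! j))"

lemma farey_step: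
  assumes "1 \<le> i" "i \<le> 2^k"
  shows "fs (Suc k) (2*i - 1 - 1) = fs k (i-1)" "ft (Suc k) (2*i - 1 - 1) = ft k (i-1)"
    "fs (Suc k) (2*i) = fs k i" "ft (Suc k) (2*i) = ft k i"
    "fs (Suc k) (2*i - 1) = fs k (i-1) + fs k i" "ft (Suc k) (2*i - 1) = ft k (i-1) + ft k i"
proof -
  have l: "length (farey_list k) = 2^k + 1" by (rule fl_length)
  have e1: "2*i - 1 - 1 = 2*(i-1)" by simp
  have e2: "2*i - 1 = 2*(i-1)+1" using assms by simp
  have si: "Suc (i-1) = i" using assms by simp
  have a: "farey_list (Suc k) ! (2*i - 1 - 1) = farey_list k ! (i-1)"
    unfolding e1 using mi_even[of "i-1" "farey_list k"] l assms by simp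
  have b: "farey_list (Suc k) ! (2*i) = farey_list k ! i"
    using mi_even[of "i" "farey_list k"] l assms by simp
  have c: "farey_list (Suc k) ! (2*i - 1) = (fst (farey_list k ! (i-1)) + fst (farey_list k ! i),
      snd (farey_list k ! (i-1)) + snd (farey_list k ! i))"
    unfolding e2 using mi_odd[of "i-1" "farey_list k"] l assms si by simp
  show "fs (Suc k) (2*i - 1 - 1) = fs k (i-1)" "ft (Suc k) (2*i - 1 - 1) = ft k (i-1)"
    "fs (Suc k) (2*i) = fs k i" "ft (Suc k) (2*i) = ft k i"
    "fs (Suc k) (2*i - 1) = fs k (i-1) + fs k i" "ft (Suc k) (2*i - 1) = ft k (i-1) + ft k i"
    using a b c by (simp_all add: fs_def ft_def)
qed

definition Ppos :: "nat \<Rightarrow> nat \<Rightarrow> nat \<Rightarrow> int \<times> int \<times> int \<times> int \<Rightarrow> bool" where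
  "Ppos n k i tup = (case tup of (x,y,z,w) \<Rightarrow> 1 \<le> i \<and> i \<le> 2^k \<and>
     x = ft k (i-1) \<and> x * int n + y = - fs k (i-1) \<and> z - x = - ft k i \<and>
     (z * int n + w) - (x * int n + y) = fs k i)"

definition Pneg :: "nat \<Rightarrow> nat \<Rightarrow> nat \<Rightarrow> int \<times> int \<times> int \<times> int \<Rightarrow> bool" where
  "Pneg n k i tup = (case tup of (x,y,z,w) \<Rightarrow> 1 \<le> i \<and> i \<le> 2^k \<and>
     x = - ft k i \<and> x * int n + y = fs k i \<and> z - x = ft k (i-1) \<and>
     (z * int n + w) - (x * int n + y) = - fs k (i-1))"

lemma idx_bounds: "(1::nat) \<le> i \<Longrightarrow> i \<le> 2^k \<Longrightarrow> 1 \<le> 2*i-1 \<and> 2*i-1 \<le> 2^Suc k \<and> 1 \<le> 2*i \<and> 2*i \<le> 2^Suc k"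
  by auto

lemma step_pos1: assumes "Ppos n k i t" "type1_step t t'" shows "Pneg n (Suc k) (2*i) t'"
proof -
  obtain x y z w where t: "t = (x,y,z,w)" by (cases t)
  have t': "t' = (z-x, w-y, x, y)" using assms(2) by (simp add: t type1_step_def)
  have H: "1 \<le> i" "i \<le> 2^k" "x = ft k (i-1)" "x * int n + y = - fs k (i-1)" "z - x = - ft k i"
     "(z * int n + w) - (x * int n + y) = fs k i" using assms(1) unfolding t Ppos_def prod.case by blast+
  note F = farey_step[OF H(1,2)] idx_bounds[OF H(1,2)]
  have e1: "(z - x) * int n + (w - y) = fs k i" using H(6) by (simp add: algebra_simps)
  have e2: "(x * int n + y) - ((z-x) * int n + (w - y)) = - fs k (i-1) - fs k i" using H(4) e1 by simp
  show ?thesis unfolding t' Pneg_def using F H e1 e2 by simp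
qed

lemma step_pos2: assumes "Ppos n k i t" "type2_step t t'" shows "Ppos n (Suc k) (2*i-1) t'"
proof -
  obtain x y z w where t: "t = (x,y,z,w)" by (cases t)
  have t': "t' = (x, y, z-x, w-y)" using assms(2) by (simp add: t type2_step_def)
  have H: "1 \<le> i" "i \<le> 2^k" "x = ft k (i-1)" "x * int n + y = - fs k (i-1)" "z - x = - ft k i"
     "(z * int n + w) - (x * int n + y) = fs k i" using assms(1) unfolding t Ppos_def prod.case by blast+
  note F = farey_step[OF H(1,2)] idx_bounds[OF H(1,2)]
  have e1: "(z - x) * int n + (w - y) = fs k i" using H(6) by (simp add: algebra_simps)
  have e2: "((z-x) * int n + (w - y)) - (x * int n + y) = fs k (i-1) + fs k i" using H(4) e1 by simp
  show ?thesis unfolding t' Ppos_def using F H e1 e2 by simp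
qed

lemma step_neg1: assumes "Pneg n k i t" "type1_step t t'" shows "Ppos n (Suc k) (2*i-1) t'"
proof -
  obtain x y z w where t: "t = (x,y,z,w)" by (cases t)
  have t': "t' = (z-x, w-y, x, y)" using assms(2) by (simp add: t type1_step_def)
  have H: "1 \<le> i" "i \<le> 2^k" "x = - ft k i" "x * int n + y = fs k i" "z - x = ft k (i-1)"
     "(z * int n + w) - (x * int n + y) = - fs k (i-1)" using assms(1) unfolding t Pneg_def prod.case by blast+
  note F = farey_step[OF H(1,2)] idx_bounds[OF H(1,2)]
  have e1: "(z - x) * int n + (w - y) = - fs k (i-1)" using H(6) by (simp add: algebra_simps)
  have e2: "(x * int n + y) - ((z-x) * int n + (w - y)) = fs k (i-1) + fs k i" using H(4) e1 by simp
  show ?thesis unfolding t' Ppos_def using F H e1 e2 by simp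
qed

lemma step_neg2: assumes "Pneg n k i t" "type2_step t t'" shows "Pneg n (Suc k) (2*i) t'"
proof -
  obtain x y z w where t: "t = (x,y,z,w)" by (cases t)
  have t': "t' = (x, y, z-x, w-y)" using assms(2) by (simp add: t type2_step_def)
  have H: "1 \<le> i" "i \<le> 2^k" "x = - ft k i" "x * int n + y = fs k i" "z - x = ft k (i-1)"
     "(z * int n + w) - (x * int n + y) = - fs k (i-1)" using assms(1) unfolding t Pneg_def prod.case by blast+
  note F = farey_step[OF H(1,2)] idx_bounds[OF H(1,2)]
  have e1: "(z - x) * int n + (w - y) = - fs k (i-1)" using H(6) by (simp add: algebra_simps)
  have e2: "((z-x) * int n + (w - y)) - (x * int n + y) = - fs k (i-1) - fs k i" using H(4) e1 by simp
  show ?thesis unfolding t' Pneg_def using F H e1 e2 by simp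
qed

lemma ft_pos: "j \<le> 2^k \<Longrightarrow> 0 < ft k j"
  using fl_pos[of j k] fl_length[of k] by (simp add: ft_def)

lemma Ppos_sgn: "Ppos n k i t \<Longrightarrow> 0 < fst t"
  using ft_pos[of "i-1" k] by (cases t) (auto simp: Ppos_def)

lemma Pneg_sgn: "Pneg n k i t \<Longrightarrow> fst t < 0"
  using ft_pos[of "i" k] by (cases t) (auto simp: Pneg_def)

lemma mp_n_ge1: "0 < \<alpha> \<Longrightarrow> \<alpha> < 1 \<Longrightarrow> 1 \<le> mp_n \<alpha>"
proof -
  assume a: "0 < \<alpha>" "\<alpha> < 1"
  have "1 < 1/\<alpha>" using a by (simp add: field_simps)
  then have "1 \<le> \<lfloor>1/\<alpha>\<rfloor>" by linarith
  then show ?thesis unfolding mp_n_def by linarith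
qed

lemma conv_int:
  fixes N a b \<alpha> :: real
  assumes "1 \<le> N" "0 \<le> a" "0 \<le> b" "0 < \<alpha>"
  shows "\<alpha> \<in> {1/(N+b)<..<1/(N+a)} \<longleftrightarrow> a < 1/\<alpha> - N \<and> 1/\<alpha> - N < b"
proof -
  have p1: "0 < N + a" "0 < N + b" using assms by auto
  have "1/(N+b) < \<alpha> \<longleftrightarrow> 1/\<alpha> < N + b" using p1 assms(4) by (simp add: field_simps)
  moreover have "\<alpha> < 1/(N+a) \<longleftrightarrow> N + a < 1/\<alpha>" using p1 assms(4) by (simp add: field_simps)
  ultimately show ?thesis by auto
qed

lemma mem_iff:
  assumes "0 < \<alpha>" "\<alpha> < 1" "1 \<le> i" "i \<le> 2^k"
  shows "\<alpha> \<in> farey_interval (mp_n \<alpha>) k i \<longleftrightarrow>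
     fv k (i-1) < 1/\<alpha> - real (mp_n \<alpha>) \<and> 1/\<alpha> - real (mp_n \<alpha>) < fv k i"
proof -
  have "farey_a k (i+1) = fv k i" "farey_a k i = fv k (i-1)" by (simp_all add: farey_a_fv)
  then show ?thesis unfolding farey_interval_def
    using conv_int[of "real (mp_n \<alpha>)" "fv k (i-1)" "fv k i" \<alpha>] mp_n_ge1[OF assms(1,2)] fv_nonneg assms
    by simp
qed

lemma idx_unique:
  assumes "0 < \<alpha>" "\<alpha> < 1" "1 \<le> i" "i \<le> 2^k"
    "fv k (i-1) < 1/\<alpha> - real (mp_n \<alpha>)" "1/\<alpha> - real (mp_n \<alpha>) < fv k i"
  shows "farey_index \<alpha> k = i"
  unfolding farey_index_def
proof (rule the_equality)
  show "1 \<le> i \<and> i \<le> 2 ^ k \<and> \<alpha> \<in> farey_interval (mp_n \<alpha>) k i"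
    using mem_iff assms by simp
next
  fix j assume j: "1 \<le> j \<and> j \<le> 2 ^ k \<and> \<alpha> \<in> farey_interval (mp_n \<alpha>) k j"
  then have jb: "fv k (j-1) < 1/\<alpha> - real (mp_n \<alpha>)" "1/\<alpha> - real (mp_n \<alpha>) < fv k j"
    using mem_iff assms(1,2) by blast+
  have len: "length (farey_list k) = 2^k + 1" by (rule fl_length)
  show "j = i"
  proof (rule ccontr)
    assume "j \<noteq> i"
    then consider "j < i" | "i < j" by linarith
    then show False
    proof cases
      case 1
      then have "fv k j \<le> fv k (i-1)" using fv_mono[of j "i-1" k] len assms by simp
      then show False using jb assms by linarith
    next
      case 2
      then have "fv k i \<le> fv k (j-1)" using fv_mono[of i "j-1" k] len j by auto
      then show False using jb assms by linarith
    qed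
  qed
qed

lemma wlin:
  fixes \<alpha> :: real and x y :: int and n :: nat
  assumes "0 < \<alpha>" "0 < real_of_int x + real_of_int y * \<alpha>"
  shows "0 < real_of_int x * (1/\<alpha> - real n) + real_of_int (x * int n + y)"
proof -
  have "real_of_int x * (1/\<alpha> - real n) + real_of_int (x * int n + y) = (real_of_int x + real_of_int y * \<alpha>) / \<alpha>"
    using assms(1) by (simp add: field_simps)
  then show ?thesis using assms by simp
qed

lemma low_fv: "j \<le> 2^k \<Longrightarrow> 0 < real_of_int (ft k j) * b - real_of_int (fs k j) \<Longrightarrow> fv k j < b"
  using ft_pos[of j k] unfolding fv_def ft_def fs_def by (simp add: field_simps)

lemma up_fv: "j \<le> 2^k \<Longrightarrow> 0 < real_of_int (fs k j) - real_of_int (ft k j) * b \<Longrightarrow> b < fv k j"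
  using ft_pos[of j k] unfolding fv_def ft_def fs_def by (simp add: field_simps)

lemma pos_idx:
  assumes a: "0 < \<alpha>" "\<alpha> < 1"
    and wt: "case t of (x, y, z, w) \<Rightarrow>
                      0 < real_of_int x + real_of_int y * \<alpha> \<and>
                      real_of_int x + real_of_int y * \<alpha> < real_of_int z + real_of_int w * \<alpha>"
    and P: "Ppos (mp_n \<alpha>) k i t"
  shows "farey_index \<alpha> k = i"
proof -
  obtain x y z w where t: "t = (x,y,z,w)" by (cases t)
  define n where "n = mp_n \<alpha>"
  have H: "1 \<le> i" "i \<le> 2^k" "x = ft k (i-1)" "x * int n + y = - fs k (i-1)" "z - x = - ft k i"
     "(z - x) * int n + (w - y) = fs k i" using P unfolding t Ppos_def prod.case n_def
     by (blast, blast, blast, blast, blast, simp add: algebra_simps)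
  have w1: "0 < real_of_int x + real_of_int y * \<alpha>" using wt t by simp
  have w2: "0 < real_of_int (z - x) + real_of_int (w - y) * \<alpha>" using wt t by (simp add: algebra_simps)
  have c1: "0 < real_of_int x * (1/\<alpha> - real n) + real_of_int (x * int n + y)" by (rule wlin[OF a(1) w1])
  have c2: "0 < real_of_int (z - x) * (1/\<alpha> - real n) + real_of_int ((z - x) * int n + (w - y))"
    by (rule wlin[OF a(1) w2])
  have l: "fv k (i-1) < 1/\<alpha> - real n"
    apply (rule low_fv) using H(2) apply simp
    using c1 unfolding H(4) unfolding H(3) by simp
  have u: "1/\<alpha> - real n < fv k i"
    apply (rule up_fv) using H(2) apply simp
    using c2 unfolding H(6) unfolding H(5) by simp
  show ?thesis using idx_unique[OF a H(1,2)] l u n_def by simp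
qed

lemma neg_idx:
  assumes a: "0 < \<alpha>" "\<alpha> < 1"
    and wt: "case t of (x, y, z, w) \<Rightarrow>
                      0 < real_of_int x + real_of_int y * \<alpha> \<and>
                      real_of_int x + real_of_int y * \<alpha> < real_of_int z + real_of_int w * \<alpha>"
    and P: "Pneg (mp_n \<alpha>) k i t"
  shows "farey_index \<alpha> k = i"
proof -
  obtain x y z w where t: "t = (x,y,z,w)" by (cases t)
  define n where "n = mp_n \<alpha>"
  have H: "1 \<le> i" "i \<le> 2^k" "x = - ft k i" "x * int n + y = fs k i" "z - x = ft k (i-1)"
     "(z * int n + w) - (x * int n + y) = - fs k (i-1)" using P unfolding t Pneg_def prod.case n_def
     by blast+
  have H6: "(z - x) * int n + (w - y) = - fs k (i-1)" using H(6) by (simp add: algebra_simps)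
  have w1: "0 < real_of_int x + real_of_int y * \<alpha>" using wt t by simp
  have w2: "0 < real_of_int (z - x) + real_of_int (w - y) * \<alpha>" using wt t by (simp add: algebra_simps)
  have c1: "0 < real_of_int x * (1/\<alpha> - real n) + real_of_int (x * int n + y)" by (rule wlin[OF a(1) w1])
  have c2: "0 < real_of_int (z - x) * (1/\<alpha> - real n) + real_of_int ((z - x) * int n + (w - y))"
    by (rule wlin[OF a(1) w2])
  have l: "fv k (i-1) < 1/\<alpha> - real n"
    apply (rule low_fv) using H(2) apply simp
    using c2 unfolding H6 unfolding H(5) by simp
  have u: "1/\<alpha> - real n < fv k i"
    apply (rule up_fv) using H(2) apply simp
    using c1 unfolding H(4) unfolding H(3) by simp
  show ?thesis using idx_unique[OF a H(1,2)] l u n_def by simp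
qed

theorem corollary4p10:
  fixes \<alpha> :: real and T :: "nat \<Rightarrow> int \<times> int \<times> int \<times> int"
  assumes alpha_range: "0 < \<alpha>" "\<alpha> < 1"
    and alpha_irrational: "\<alpha> \<notin> \<rat>"
    and T0: "T 0 = (1, - int (mp_n \<alpha>), 0, 1)"
    and weights: "\<And>k. case T k of (x, y, z, w) \<Rightarrow>
                      0 < real_of_int x + real_of_int y * \<alpha> \<and>
                      real_of_int x + real_of_int y * \<alpha> < real_of_int z + real_of_int w * \<alpha>"
    and steps: "\<And>k. type1_step (T k) (T (Suc k)) \<or> type2_step (T k) (T (Suc k))"
    and sign_nonzero: "\<And>k. fst (T k) \<noteq> 0"
  shows "\<forall>k.
     (sgn (fst (T k)) = 1 \<and> type1_step (T k) (T (Suc k)) \<longrightarrow>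
        farey_index \<alpha> (Suc k) = 2 * farey_index \<alpha> k \<and> sgn (fst (T (Suc k))) = -1) \<and>
     (sgn (fst (T k)) = 1 \<and> type2_step (T k) (T (Suc k)) \<longrightarrow>
        farey_index \<alpha> (Suc k) = 2 * farey_index \<alpha> k - 1 \<and> sgn (fst (T (Suc k))) = 1) \<and>
     (sgn (fst (T k)) = -1 \<and> type1_step (T k) (T (Suc k)) \<longrightarrow>
        farey_index \<alpha> (Suc k) = 2 * farey_index \<alpha> k - 1 \<and> sgn (fst (T (Suc k))) = 1) \<and>
     (sgn (fst (T k)) = -1 \<and> type2_step (T k) (T (Suc k)) \<longrightarrow>
        farey_index \<alpha> (Suc k) = 2 * farey_index \<alpha> k \<and> sgn (fst (T (Suc k))) = -1) \<and>
     (type1_step (T k) (T (Suc k)) \<longrightarrow> sgn (fst (T (Suc k))) = - sgn (fst (T k))) \<and>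
     (type2_step (T k) (T (Suc k)) \<longrightarrow> sgn (fst (T (Suc k))) = sgn (fst (T k)))"
proof
  fix k
  define n where "n = mp_n \<alpha>"
  have inv: "\<exists>i. Ppos n k i (T k) \<or> Pneg n k i (T k)" for k
  proof (induction k)
    case 0
    have "Ppos n 0 1 (T 0)" unfolding T0 Ppos_def n_def by (simp add: fs_def ft_def)
    then show ?case by blast
  next
    case (Suc k)
    then obtain i where "Ppos n k i (T k) \<or> Pneg n k i (T k)" by blast
    then show ?case
    proof
      assume A: "Ppos n k i (T k)"
      show ?case using steps[of k]
      proof
        assume "type1_step (T k) (T (Suc k))"
        then show ?case using step_pos1[OF A] by blast
      next
        assume "type2_step (T k) (T (Suc k))"
        then show ?case using step_pos2[OF A] by blast
      qed
    next
      assume A: "Pneg n k i (T k)"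
      show ?case using steps[of k]
      proof
        assume "type1_step (T k) (T (Suc k))"
        then show ?case using step_neg1[OF A] by blast
      next
        assume "type2_step (T k) (T (Suc k))"
        then show ?case using step_neg2[OF A] by blast
      qed
    qed
  qed
  obtain i where Pi: "Ppos n k i (T k) \<or> Pneg n k i (T k)" using inv by blast
  have wk: "\<And>k. case T k of (x, y, z, w) \<Rightarrow>
                      0 < real_of_int x + real_of_int y * \<alpha> \<and>
                      real_of_int x + real_of_int y * \<alpha> < real_of_int z + real_of_int w * \<alpha>"
    by (rule weights)
  show "(sgn (fst (T k)) = 1 \<and> type1_step (T k) (T (Suc k)) \<longrightarrow>
        farey_index \<alpha> (Suc k) = 2 * farey_index \<alpha> k \<and> sgn (fst (T (Suc k))) = -1) \<and>
     (sgn (fst (T k)) = 1 \<and> type2_step (T k) (T (Suc k)) \<longrightarrow>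
        farey_index \<alpha> (Suc k) = 2 * farey_index \<alpha> k - 1 \<and> sgn (fst (T (Suc k))) = 1) \<and>
     (sgn (fst (T k)) = -1 \<and> type1_step (T k) (T (Suc k)) \<longrightarrow>
        farey_index \<alpha> (Suc k) = 2 * farey_index \<alpha> k - 1 \<and> sgn (fst (T (Suc k))) = 1) \<and>
     (sgn (fst (T k)) = -1 \<and> type2_step (T k) (T (Suc k)) \<longrightarrow>
        farey_index \<alpha> (Suc k) = 2 * farey_index \<alpha> k \<and> sgn (fst (T (Suc k))) = -1) \<and>
     (type1_step (T k) (T (Suc k)) \<longrightarrow> sgn (fst (T (Suc k))) = - sgn (fst (T k))) \<and>
     (type2_step (T k) (T (Suc k)) \<longrightarrow> sgn (fst (T (Suc k))) = sgn (fst (T k)))"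
  proof (cases "Ppos n k i (T k)")
    case True
    have s: "sgn (fst (T k)) = 1" using Ppos_sgn[OF True] by simp
    have fi: "farey_index \<alpha> k = i" using pos_idx[OF alpha_range wk True[unfolded n_def]] .
    have t1: "farey_index \<alpha> (Suc k) = 2*i \<and> sgn (fst (T (Suc k))) = -1"
      if "type1_step (T k) (T (Suc k))"
    proof -
      have P: "Pneg n (Suc k) (2*i) (T (Suc k))" by (rule step_pos1[OF True that])
      show ?thesis using neg_idx[OF alpha_range wk P[unfolded n_def]] Pneg_sgn[OF P] by simp
    qed
    have t2: "farey_index \<alpha> (Suc k) = 2*i - 1 \<and> sgn (fst (T (Suc k))) = 1"
      if "type2_step (T k) (T (Suc k))"
    proof -
      have P: "Ppos n (Suc k) (2*i-1) (T (Suc k))" by (rule step_pos2[OF True that])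
      show ?thesis using pos_idx[OF alpha_range wk P[unfolded n_def]] Ppos_sgn[OF P] by simp
    qed
    show ?thesis using s fi t1 t2 by auto
  next
    case False
    then have N: "Pneg n k i (T k)" using Pi by blast
    have s: "sgn (fst (T k)) = -1" using Pneg_sgn[OF N] by simp
    have fi: "farey_index \<alpha> k = i" using neg_idx[OF alpha_range wk N[unfolded n_def]] .
    have t1: "farey_index \<alpha> (Suc k) = 2*i - 1 \<and> sgn (fst (T (Suc k))) = 1"
      if "type1_step (T k) (T (Suc k))"
    proof -
      have P: "Ppos n (Suc k) (2*i-1) (T (Suc k))" by (rule step_neg1[OF N that])
      show ?thesis using pos_idx[OF alpha_range wk P[unfolded n_def]] Ppos_sgn[OF P] by simp
    qed
    have t2: "farey_index \<alpha> (Suc k) = 2*i \<and> sgn (fst (T (Suc k))) = -1"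
      if "type2_step (T k) (T (Suc k))"
    proof -
      have P: "Pneg n (Suc k) (2*i) (T (Suc k))" by (rule step_neg2[OF N that])
      show ?thesis using neg_idx[OF alpha_range wk P[unfolded n_def]] Pneg_sgn[OF P] by simp
    qed
    show ?thesis using s fi t1 t2 by auto
  qed
qed

end
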